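(* Let $E$ be finite, $\Omega=E^{\mathbb{Z}}$ with left shift $S$, fix $\mathtt a\in E$ and let $\mathbf a$ be the all-$\mathtt a$ configuration. Let $\phi\in C(\Omega)$ have the extensibility property, let $\gamma^\phi$ be the associated Gibbsian specification $\gamma^\phi_\Lambda(\omega_\Lambda|\omega_{\Lambda^c})=\big(\sum_{\xi_\Lambda\in E^\Lambda}e^{\rho^\phi(\xi_\Lambda\omega_{\mathbb{Z}\setminus\Lambda},\omega)}\big)^{-1}$, and let $\phi_{\gamma^\phi}(\omega)=\log\frac{\gamma^\phi_{\{0\}}(\omega_0|\mathbf a_{-\infty}^{-1}\omega_1^\infty)}{\gamma^\phi_{\{0\}}(\mathtt a|\mathbf a_{-\infty}^{-1}\omega_1^\infty)}$. Then $\phi_{\gamma^\phi}$ is weakly cohomologous to $\phi$: there exists $C\in\mathbb{R}$ such that for every shift-invariant Borel probability measure $\tau$ on $\Omega$, $$\int_\Omega\phi_{\gamma^\phi}\,d\tau=\int_\Omega\phi\,d\tau+C.$$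
   Context: $E$ finite, discrete; $\Omega=E^{\mathbb{Z}}$ with product topology; $(S\omega)_i=\omega_{i+1}$. For $\omega\in\Omega$, $a\in E$, $\omega^a$ equals $a$ at $0$ and $\omega_k$ at $k\neq0$. A continuous $\phi$ has the extensibility property if for all $a,\tilde a\in E$, $\sum_{i=-n}^{n}[\phi(S^i\omega^a)-\phi(S^i\omega^{\tilde a})]$ converges uniformly in $\omega$; then $\rho^\phi(\xi,\eta)=\lim_{n}\sum_{i=-n}^n[\phi(S^i\xi)-\phi(S^i\eta)]$ exists for all $\xi,\eta$ differing at finitely many sites, and $\gamma^\phi$ above is a translation-invariant Gibbsian specification. $\xi_\Lambda\omega_{\mathbb{Z}\setminus\Lambda}$ equals $\xi$ on $\Lambda$ and $\omega$ elsewhere; $\mathbf a_{-\infty}^{-1}\omega_1^\infty$ is the boundary condition equal to $\mathtt a$ on negative sites and $\omega_k$ on sites $k\ge1$ (so $\phi_{\gamma^\phi}$ depends only on $\omega_0,\omega_1,\dots$). *)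

theory Defs
  imports "HOL-Analysis.Analysis" "HOL-Probability.Probability"
begin

text \<open>Configurations are functions int \<Rightarrow> 'e, with the product topology
(from Function_Topology); 'e is finite with the discrete topology.\<close>

definition shiftp :: "int \<Rightarrow> (int \<Rightarrow> 'e) \<Rightarrow> (int \<Rightarrow> 'e)" where
  "shiftp i w = (\<lambda>k. w (k + i))"

definition shift :: "(int \<Rightarrow> 'e) \<Rightarrow> (int \<Rightarrow> 'e)" where
  "shift w = (\<lambda>k. w (k + 1))"

definition psum :: "((int \<Rightarrow> 'e) \<Rightarrow> real) \<Rightarrow> (int \<Rightarrow> 'e) \<Rightarrow> (int \<Rightarrow> 'e) \<Rightarrow> nat \<Rightarrow> real" where
  "psum \<phi> \<xi> \<eta> n = (\<Sum>i\<in>{- int n..int n}. \<phi> (shiftp i \<xi>) - \<phi> (shiftp i \<eta>))"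

definition extensible :: "((int \<Rightarrow> 'e::topological_space) \<Rightarrow> real) \<Rightarrow> bool" where
  "extensible \<phi> \<longleftrightarrow> continuous_on UNIV \<phi> \<and>
     (\<forall>a a'. \<exists>g. uniform_limit UNIV (\<lambda>n w. psum \<phi> (w(0 := a)) (w(0 := a')) n) g sequentially)"

definition rho :: "((int \<Rightarrow> 'e) \<Rightarrow> real) \<Rightarrow> (int \<Rightarrow> 'e) \<Rightarrow> (int \<Rightarrow> 'e) \<Rightarrow> real" where
  "rho \<phi> \<xi> \<eta> = lim (psum \<phi> \<xi> \<eta>)"

definition gibbs_spec :: "((int \<Rightarrow> 'e::finite) \<Rightarrow> real) \<Rightarrow> int set \<Rightarrow> (int \<Rightarrow> 'e) \<Rightarrow> real" where
  "gibbs_spec \<phi> \<Lambda> w =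
     inverse (\<Sum>\<xi>\<in>PiE \<Lambda> (\<lambda>_. UNIV). exp (rho \<phi> (\<lambda>k. if k \<in> \<Lambda> then \<xi> k else w k) w))"

definition bdry :: "'e \<Rightarrow> (int \<Rightarrow> 'e) \<Rightarrow> (int \<Rightarrow> 'e)" where
  "bdry a w = (\<lambda>k. if k < 0 then a else w k)"

definition phi_gamma :: "((int \<Rightarrow> 'e::finite) \<Rightarrow> real) \<Rightarrow> 'e \<Rightarrow> (int \<Rightarrow> 'e) \<Rightarrow> real" where
  "phi_gamma \<phi> a w =
     ln (gibbs_spec \<phi> {0} (bdry a w) / gibbs_spec \<phi> {0} ((bdry a w)(0 := a)))"

end

theory Submission
  imports Defs
begin


lemma cont_shiftp: "continuous_on UNIV (shiftp i :: (int \<Rightarrow> 'e::topological_space) \<Rightarrow> _)"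
  unfolding shiftp_def by (intro continuous_on_coordinatewise_then_product) simp

lemma cont_shift: "continuous_on UNIV (shift :: (int \<Rightarrow> 'e::topological_space) \<Rightarrow> _)"
  unfolding shift_def by (intro continuous_on_coordinatewise_then_product) simp

lemma cont_bdry: "continuous_on UNIV (bdry a :: (int \<Rightarrow> 'e::topological_space) \<Rightarrow> _)"
  unfolding bdry_def proof (intro continuous_on_coordinatewise_then_product)
  fix i :: int show "continuous_on UNIV (\<lambda>x::int \<Rightarrow> 'e. if i < 0 then a else x i)"
    by (cases "i < 0") auto
qed

lemma cont_upd: "continuous_on UNIV (\<lambda>w::int \<Rightarrow> 'e::topological_space. w(j := b))"
proof (intro continuous_on_coordinatewise_then_product)
  fix i :: int show "continuous_on UNIV (\<lambda>x::int \<Rightarrow> 'e. (x(j:=b)) i)"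
    by (cases "i = j") auto
qed

lemma compact_UNIV_fun: "compact (UNIV :: (int \<Rightarrow> 'e::{finite,topological_space}) set)"
proof -
  have "compact_space (product_topology (\<lambda>i::int. (euclidean :: 'e topology)) UNIV)"
    unfolding compact_space_product_topology
    by (simp add: compact_space_def compactin_euclidean_iff finite_imp_compact)
  then show ?thesis unfolding euclidean_product_topology
    by (simp add: compact_space_def compactin_euclidean_iff)
qed

definition cyl :: "(int \<Rightarrow> 'e) \<Rightarrow> nat \<Rightarrow> (int \<Rightarrow> 'e) set" where
  "cyl x N = {y. \<forall>k. \<bar>k\<bar> \<le> int N \<longrightarrow> y k = x k}"

lemma open_cyl: "open (cyl (x :: int \<Rightarrow> 'e::discrete_topology) N)"
proof -
  have "cyl x N = PiE UNIV (\<lambda>k. if \<bar>k\<bar> \<le> int N then {x k} else UNIV)"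
    unfolding cyl_def PiE_UNIV_domain Pi_def by (rule set_eqI) (simp split: if_split)
  moreover have "openin (product_topology (\<lambda>i. euclidean) UNIV) (PiE UNIV (\<lambda>k. if \<bar>k\<bar> \<le> int N then {x k} else (UNIV::'e set)))"
  proof (rule product_topology_basis)
    show "openin euclidean (if \<bar>k\<bar> \<le> int N then {x k} else UNIV)" for k
      using Topological_Spaces.open_discrete[of "{x k}"] by simp
    have "{i. (if \<bar>i\<bar> \<le> int N then {x i} else UNIV) \<noteq> topspace euclidean} \<subseteq> {-int N..int N}"
      by auto
    then show "finite {i. (if \<bar>i\<bar> \<le> int N then {x i} else UNIV) \<noteq> topspace euclidean}"
      using finite_subset by blast
  qed
  ultimately show ?thesis by (simp add: open_fun_def)
qed

lemma open_contains_cyl: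
  assumes "open (U :: (int \<Rightarrow> 'e::topological_space) set)" "x \<in> U"
  shows "\<exists>N. cyl x N \<subseteq> U"
proof -
  obtain X where X: "x \<in> PiE UNIV X" "finite {i. X i \<noteq> topspace euclidean}" "PiE UNIV X \<subseteq> U"
    using product_topology_open_contains_basis[of "\<lambda>i. euclidean" UNIV U x] assms
    by (auto simp: open_fun_def)
  define F where "F = {i. X i \<noteq> UNIV}"
  have fF: "finite F" using X(2) by (simp add: F_def)
  define N where "N = nat (Max (insert 0 (abs ` F)))"
  have "cyl x N \<subseteq> PiE UNIV X"
  proof
    fix y assume y: "y \<in> cyl x N"
    have "y i \<in> X i" for i
    proof (cases "i \<in> F")
      case True
      then have "\<bar>i\<bar> \<le> Max (insert 0 (abs ` F))" using fF by (intro Max_ge) auto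
      then have "\<bar>i\<bar> \<le> int N" unfolding N_def by linarith
      then have "y i = x i" using y by (auto simp: cyl_def)
      then show ?thesis using X(1) by auto
    next
      case False then show ?thesis by (auto simp: F_def)
    qed
    then show "y \<in> PiE UNIV X" by auto
  qed
  then show ?thesis using X(3) by blast
qed

lemma cyl_uc:
  fixes \<phi> :: "(int \<Rightarrow> 'e::{finite, discrete_topology}) \<Rightarrow> real"
  assumes cont: "continuous_on UNIV \<phi>" and e: "e > 0"
  shows "\<exists>N::nat. \<forall>x y. (\<forall>k. \<bar>k\<bar> \<le> int N \<longrightarrow> x k = y k) \<longrightarrow> \<bar>\<phi> x - \<phi> y\<bar> < e"
proof -
  have "\<exists>N. cyl x N \<subseteq> \<phi> -` ball (\<phi> x) (e/2)" for x
  proof -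
    have "open (\<phi> -` ball (\<phi> x) (e/2))"
      using cont by (simp add: continuous_on_open_vimage)
    then show ?thesis using e by (intro open_contains_cyl) auto
  qed
  then obtain Nx where Nx: "\<And>x. cyl x (Nx x) \<subseteq> \<phi> -` ball (\<phi> x) (e/2)" by metis
  have cov: "UNIV \<subseteq> \<Union> ((\<lambda>x. cyl x (Nx x)) ` UNIV)" by (auto simp: cyl_def)
  obtain D where D: "finite D" "UNIV \<subseteq> \<Union> ((\<lambda>x. cyl x (Nx x)) ` D)"
  proof (rule compactE_image[OF compact_UNIV_fun, of UNIV "\<lambda>x. cyl x (Nx x)"])
    show "open (cyl x (Nx x))" for x by (rule open_cyl)
    show "UNIV \<subseteq> \<Union> ((\<lambda>x. cyl x (Nx x)) ` UNIV)" by (rule cov)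
  qed auto
  define N where "N = Max (insert 0 (Nx ` D))"
  have "\<bar>\<phi> y - \<phi> z\<bar> < e" if yz: "\<forall>k. \<bar>k\<bar> \<le> int N \<longrightarrow> y k = z k" for y z
  proof -
    obtain x where x: "x \<in> D" "y \<in> cyl x (Nx x)" using D(2) by blast
    have "Nx x \<le> N" unfolding N_def using D(1) x(1) by (intro Max_ge) auto
    then have "z \<in> cyl x (Nx x)" using x(2) yz by (auto simp: cyl_def)
    with x(2) Nx[of x] have "dist (\<phi> y) (\<phi> x) < e/2" "dist (\<phi> z) (\<phi> x) < e/2"
      by (auto simp: dist_commute)
    then show ?thesis by (simp add: dist_real_def abs_if split: if_splits)
  qed
  then show ?thesis by blast
qed



lemma psum_add: "psum \<phi> \<xi> \<eta> n + psum \<phi> \<eta> \<zeta> n = psum \<phi> \<xi> \<zeta> n"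
  unfolding psum_def by (simp add: sum.distrib[symmetric])

lemma psum_self: "psum \<phi> \<xi> \<xi> n = 0"
  unfolding psum_def by simp

lemma ext_lim:
  assumes "extensible \<phi>"
  shows "psum \<phi> (v(0:=b)) (v(0:=b')) \<longlonglongrightarrow> rho \<phi> (v(0:=b)) (v(0:=b'))"
proof -
  obtain g where "uniform_limit UNIV (\<lambda>n w. psum \<phi> (w(0 := b)) (w(0 := b')) n) g sequentially"
    using assms unfolding extensible_def by blast
  from tendsto_uniform_limitI[OF this, of v] have "convergent (psum \<phi> (v(0:=b)) (v(0:=b')))"
    by (auto simp: convergent_def)
  then show ?thesis unfolding rho_def by (simp add: convergent_LIMSEQ_iff)
qed

lemma rho_add:
  assumes "extensible \<phi>"
  shows "rho \<phi> (v(0:=b)) (v(0:=c)) = rho \<phi> (v(0:=b)) (v(0:=d)) + rho \<phi> (v(0:=d)) (v(0:=c))"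
proof -
  have "psum \<phi> (v(0:=b)) (v(0:=c)) \<longlonglongrightarrow> rho \<phi> (v(0:=b)) (v(0:=d)) + rho \<phi> (v(0:=d)) (v(0:=c))"
    using tendsto_add[OF ext_lim[OF assms, of v b d] ext_lim[OF assms, of v d c]]
    by (simp add: psum_add)
  then show ?thesis using ext_lim[OF assms, of v b c] LIMSEQ_unique by blast
qed

lemma rho_self:
  assumes "extensible \<phi>"
  shows "rho \<phi> (v(0:=b)) (v(0:=b)) = 0"
  using rho_add[OF assms, of v b b b] by simp

lemma phi_gamma_eq:
  fixes \<phi> :: "(int \<Rightarrow> 'e::{finite,topological_space}) \<Rightarrow> real"
  assumes "extensible \<phi>"
  shows "phi_gamma \<phi> a w = rho \<phi> (bdry a w) ((bdry a w)(0 := a))"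
proof -
  define x where "x = bdry a w"
  define P where "P = PiE {0::int} (\<lambda>_. (UNIV :: 'e set))"
  have upd: "(\<lambda>k. if k \<in> {0} then \<xi> k else y k) = y(0 := \<xi> 0)" for \<xi> and y :: "int \<Rightarrow> 'e"
    by (rule ext) simp
  have xx: "x = x(0 := x 0)" by simp
  define r where "r = rho \<phi> (x(0:=a)) (x(0 := x 0))"
  define Z where "Z = (\<Sum>\<xi>\<in>P. exp (rho \<phi> (x(0 := \<xi> 0)) (x(0:=a))))"
  have g1: "gibbs_spec \<phi> {0} x = inverse (exp r * Z)"
  proof -
    have eq: "exp (rho \<phi> (x(0 := \<xi> 0)) x) = exp r * exp (rho \<phi> (x(0 := \<xi> 0)) (x(0:=a)))" for \<xi>
      unfolding r_def using rho_add[OF assms, of x "\<xi> 0" "x 0" a] by (simp add: exp_add)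
    show ?thesis unfolding gibbs_spec_def upd Z_def P_def eq
      by (simp add: sum_distrib_left)
  qed
  have g2: "gibbs_spec \<phi> {0} (x(0:=a)) = inverse Z"
    unfolding gibbs_spec_def upd fun_upd_upd Z_def P_def by (rule refl)
  have "P \<noteq> {}" unfolding P_def by (simp add: PiE_eq_empty_iff)
  moreover have "finite P" unfolding P_def by (simp add: finite_PiE)
  ultimately have Zpos: "Z > 0" unfolding Z_def by (intro sum_pos) auto
  have "phi_gamma \<phi> a w = ln (inverse (exp r * Z) / inverse Z)"
    unfolding phi_gamma_def x_def[symmetric] g1 g2 ..
  also have "\<dots> = - r" using Zpos by (simp add: field_simps ln_div)
  also have "\<dots> = rho \<phi> (x(0 := x 0)) (x(0:=a))"
    unfolding r_def using rho_add[OF assms, of x "x 0" "x 0" a] rho_self[OF assms, of x "x 0"] by simp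
  finally show ?thesis unfolding x_def by simp
qed



lemma abs_int_le:
  fixes f :: "'a \<Rightarrow> real"
  assumes "prob_space M" "integrable M f" "\<And>x. \<bar>f x\<bar> \<le> e"
  shows "\<bar>\<integral>x. f x \<partial>M\<bar> \<le> e"
proof -
  have "(\<integral>x. f x \<partial>M) \<le> e"
    using prob_space.integral_le_const[OF assms(1) assms(2)] assms(3) abs_le_D1 by blast
  moreover have "- e \<le> (\<integral>x. f x \<partial>M)"
    using prob_space.integral_ge_const[OF assms(1) assms(2)] assms(3)
    by (metis (mono_tags, lifting) AE_I2 abs_le_iff minus_le_iff)
  ultimately show ?thesis by linarith
qed

lemma telescope_int:
  fixes c :: "int \<Rightarrow> real"
  shows "(\<Sum>i\<in>{- int n..int n}. c i - c (i - 1)) = c (int n) - c (- int n - 1)"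
proof (induction n)
  case 0
  then show ?case by simp
next
  case (Suc n)
  have eq: "{- int (Suc n)..int (Suc n)} = insert (- int n - 1) (insert (int n + 1) {- int n..int n})"
    by auto
  show ?case unfolding eq using Suc by (simp add: sum.insert add.commute)
qed

lemma shiftp_Suc: "shiftp (int (Suc n)) w = shiftp (int n) (shift w)"
  unfolding shiftp_def shift_def by (rule ext) (simp add: algebra_simps)

lemma shiftp_upd: "shiftp i ((bdry a w)(0 := a)) = shiftp (i - 1) (bdry a (shift w))"
  unfolding shiftp_def shift_def bdry_def by (rule ext) auto



theorem lemma5p1:
  fixes \<phi> :: "(int \<Rightarrow> 'e::{finite, discrete_topology}) \<Rightarrow> real"
    and a :: 'e
  assumes "continuous_on UNIV \<phi>"
    and "extensible \<phi>"
  shows "\<exists>C::real. \<forall>\<tau>::(int \<Rightarrow> 'e) measure.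
           prob_space \<tau> \<and> sets \<tau> = sets borel \<and> distr \<tau> \<tau> shift = \<tau> \<longrightarrow>
           (\<integral>w. phi_gamma \<phi> a w \<partial>\<tau>) = (\<integral>w. \<phi> w \<partial>\<tau>) + C"
proof (intro exI[of _ "- \<phi> (\<lambda>_. a)"] allI impI)
  fix \<tau> :: "(int \<Rightarrow> 'e) measure"
  assume "prob_space \<tau> \<and> sets \<tau> = sets borel \<and> distr \<tau> \<tau> shift = \<tau>"
  then have P: "prob_space \<tau>" and sets: "sets \<tau> = sets borel" and inv: "distr \<tau> \<tau> shift = \<tau>"
    by auto
  note cont = assms(1) and ext = assms(2)
  obtain M where M: "\<And>w. \<bar>\<phi> w\<bar> \<le> M"
  proof -
    have "compact (\<phi> ` UNIV)" by (rule compact_continuous_image[OF cont compact_UNIV_fun])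
    then have "bounded (\<phi> ` UNIV)" by (rule compact_imp_bounded)
    then obtain B where "\<forall>x\<in>\<phi> ` UNIV. norm x \<le> B" by (auto simp: bounded_iff)
    then show ?thesis using that by auto
  qed
  have mb: "f \<in> borel_measurable \<tau>" if "continuous_on UNIV f" for f :: "(int \<Rightarrow> 'e) \<Rightarrow> real"
    using borel_measurable_continuous_onI[OF that] measurable_cong_sets[OF sets refl] by blast
  have shm: "shift \<in> \<tau> \<rightarrow>\<^sub>M \<tau>"
    using borel_measurable_continuous_onI[OF cont_shift] measurable_cong_sets[OF sets sets] by blast
  have shinv: "(\<integral>w. f (shift w) \<partial>\<tau>) = (\<integral>w. f w \<partial>\<tau>)" if "f \<in> borel_measurable \<tau>" for f :: "_ \<Rightarrow> real"
    using integral_distr[OF shm that] inv by simp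
  have intb: "integrable \<tau> f" if "f \<in> borel_measurable \<tau>" "\<And>w. \<bar>f w\<bar> \<le> B" for f :: "_ \<Rightarrow> real" and B
    using finite_measure.integrable_const_bound[of \<tau> f B] P that prob_space.finite_measure by auto
  define f where "f i w = \<phi> (shiftp i (bdry a w))" for i w
  have fc: "continuous_on UNIV (f i)" for i
    unfolding f_def
    by (rule continuous_on_compose2[OF cont continuous_on_compose2[OF cont_shiftp cont_bdry]]) auto
  have fm: "f i \<in> borel_measurable \<tau>" for i using mb[OF fc] .
  have fb: "\<bar>f i w\<bar> \<le> M" for i w unfolding f_def using M .
  have fi: "integrable \<tau> (f i)" for i using intb[OF fm fb] .
  have fsm: "(\<lambda>w. f i (shift w)) \<in> borel_measurable \<tau>" for i
    using measurable_compose[OF shm fm] by (simp add: comp_def)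
  have fsi: "integrable \<tau> (\<lambda>w. f i (shift w))" for i using intb[OF fsm fb] .
  define c where "c i = (\<integral>w. f i w \<partial>\<tau>)" for i
  define \<psi> where "\<psi> n w = psum \<phi> (bdry a w) ((bdry a w)(0 := a)) n" for n w
  have \<psi>eq: "\<psi> n w = (\<Sum>i\<in>{- int n..int n}. f i w - f (i - 1) (shift w))" for n w
    unfolding \<psi>_def psum_def f_def shiftp_upd ..
  have \<psi>m: "\<psi> n \<in> borel_measurable \<tau>" for n
    unfolding \<psi>eq[abs_def] using fm fsm by (intro borel_measurable_sum borel_measurable_diff) auto
  have \<psi>b: "\<bar>\<psi> n w\<bar> \<le> real (card {- int n..int n}) * (2 * M)" for n w
  proof -
    have "\<bar>\<psi> n w\<bar> \<le> (\<Sum>i\<in>{- int n..int n}. \<bar>f i w - f (i - 1) (shift w)\<bar>)"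
      unfolding \<psi>eq by (rule sum_abs)
    also have "\<dots> \<le> real (card {- int n..int n}) * (2 * M)"
    proof (rule sum_bounded_above)
      fix i show "\<bar>f i w - f (i - 1) (shift w)\<bar> \<le> 2 * M"
        using fb[of i w] fb[of "i - 1" "shift w"] by linarith
    qed
    finally show ?thesis .
  qed
  have \<psi>i: "integrable \<tau> (\<psi> n)" for n using intb[OF \<psi>m \<psi>b] .
  have \<psi>int: "(\<integral>w. \<psi> n w \<partial>\<tau>) = c (int n) - c (- int n - 1)" for n
  proof -
    have "(\<integral>w. \<psi> n w \<partial>\<tau>) = (\<Sum>i\<in>{- int n..int n}. (\<integral>w. f i w - f (i - 1) (shift w) \<partial>\<tau>))"
      unfolding \<psi>eq using fi fsi by (intro Bochner_Integration.integral_sum) auto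
    also have "\<dots> = (\<Sum>i\<in>{- int n..int n}. c i - c (i - 1))"
      unfolding c_def using fi fsi shinv[OF fm] by (intro sum.cong refl) (simp add: integral_diff)
    finally show ?thesis using telescope_int by simp
  qed
  have \<phi>sh: "(\<integral>w. \<phi> (shiftp (int n) w) \<partial>\<tau>) = (\<integral>w. \<phi> w \<partial>\<tau>)" for n
  proof (induction n)
    case 0
    have "shiftp 0 w = w" for w :: "int \<Rightarrow> 'e" unfolding shiftp_def by simp
    then show ?case by simp
  next
    case (Suc n)
    have "continuous_on UNIV (\<lambda>w. \<phi> (shiftp (int n) w))"
      by (rule continuous_on_compose2[OF cont cont_shiftp]) auto
    from shinv[OF mb[OF this]] show ?case unfolding shiftp_Suc using Suc by simp
  qed
  have lim: "(\<lambda>n. \<psi> n w) \<longlonglongrightarrow> phi_gamma \<phi> a w" for w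
  proof -
    have "bdry a w = (bdry a w)(0 := w 0)" by (simp add: fun_eq_iff bdry_def)
    then show ?thesis unfolding \<psi>_def phi_gamma_eq[OF ext]
      using ext_lim[OF ext, of "bdry a w" "w 0" a] by simp
  qed
  have pgm: "phi_gamma \<phi> a \<in> borel_measurable \<tau>"
    by (rule borel_measurable_LIMSEQ_real[OF lim \<psi>m])
  have unif: "\<forall>\<^sub>F n in sequentially. \<forall>w. \<bar>\<psi> n w - phi_gamma \<phi> a w\<bar> < e" if e: "e > 0" for e
  proof -
    have "\<forall>\<^sub>F n in sequentially. \<forall>v. \<bar>psum \<phi> (v(0:=b)) (v(0:=a)) n - rho \<phi> (v(0:=b)) (v(0:=a))\<bar> < e" for b
    proof -
      obtain g where g: "uniform_limit UNIV (\<lambda>n v. psum \<phi> (v(0 := b)) (v(0 := a)) n) g sequentially"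
        using ext unfolding extensible_def by blast
      have "g v = rho \<phi> (v(0:=b)) (v(0:=a))" for v
        using tendsto_uniform_limitI[OF g, of v] ext_lim[OF ext, of v b a] LIMSEQ_unique by blast
      then show ?thesis using g e unfolding uniform_limit_iff dist_real_def by auto
    qed
    then have "\<forall>\<^sub>F n in sequentially. \<forall>b. \<forall>v. \<bar>psum \<phi> (v(0:=b)) (v(0:=a)) n - rho \<phi> (v(0:=b)) (v(0:=a))\<bar> < e"
      by (rule eventually_all_finite)
    then show ?thesis
    proof (rule eventually_mono)
      fix n assume H: "\<forall>b. \<forall>v. \<bar>psum \<phi> (v(0:=b)) (v(0:=a)) n - rho \<phi> (v(0:=b)) (v(0:=a))\<bar> < e"
      show "\<forall>w. \<bar>\<psi> n w - phi_gamma \<phi> a w\<bar> < e"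
      proof
        fix w
        have "bdry a w = (bdry a w)(0 := w 0)" by (simp add: fun_eq_iff bdry_def)
        then show "\<bar>\<psi> n w - phi_gamma \<phi> a w\<bar> < e"
          unfolding \<psi>_def phi_gamma_eq[OF ext] using H[rule_format, of "bdry a w" "w 0"] by simp
      qed
    qed
  qed
  obtain n0 where n0: "\<And>w. \<bar>\<psi> n0 w - phi_gamma \<phi> a w\<bar> < 1"
    using eventually_happens[OF unif[of 1]] by auto
  have pgb: "\<bar>phi_gamma \<phi> a w\<bar> \<le> real (card {- int n0..int n0}) * (2 * M) + 1" for w
    using n0[of w] \<psi>b[of n0 w] by linarith
  have pgi: "integrable \<tau> (phi_gamma \<phi> a)" using intb[OF pgm pgb] .
  have \<phi>i: "integrable \<tau> \<phi>" using intb[OF mb[OF cont] M] .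
  define D where "D = (\<integral>w. phi_gamma \<phi> a w \<partial>\<tau>) - ((\<integral>w. \<phi> w \<partial>\<tau>) - \<phi> (\<lambda>_. a))"
  have Dle: "\<bar>D\<bar> \<le> 3 * e" if e: "e > 0" for e
  proof -
    obtain N where N: "\<And>x y. (\<forall>k. \<bar>k\<bar> \<le> int N \<longrightarrow> x k = y k) \<Longrightarrow> \<bar>\<phi> x - \<phi> y\<bar> < e"
      using cyl_uc[OF cont e] by blast
    have "\<forall>\<^sub>F n in sequentially. (\<forall>w. \<bar>\<psi> n w - phi_gamma \<phi> a w\<bar> < e) \<and> n \<ge> N"
      using unif[OF e] eventually_ge_at_top[of N] by (rule eventually_conj)
    from eventually_happens[OF this] obtain n where "(\<forall>w. \<bar>\<psi> n w - phi_gamma \<phi> a w\<bar> < e) \<and> n \<ge> N"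
      by auto
    then have n: "\<And>w. \<bar>\<psi> n w - phi_gamma \<phi> a w\<bar> < e" "n \<ge> N" by auto
    have "\<bar>(\<integral>w. \<psi> n w - phi_gamma \<phi> a w \<partial>\<tau>)\<bar> \<le> e"
      using n(1) by (intro abs_int_le[OF P]) (auto intro: less_imp_le \<psi>i pgi)
    then have 1: "\<bar>(c (int n) - c (- int n - 1)) - (\<integral>w. phi_gamma \<phi> a w \<partial>\<tau>)\<bar> \<le> e"
      using \<psi>i pgi \<psi>int by simp
    have sm: "(\<lambda>w. \<phi> (shiftp (int n) w)) \<in> borel_measurable \<tau>"
      by (rule mb, rule continuous_on_compose2[OF cont cont_shiftp]) auto
    have "\<bar>(\<integral>w. f (int n) w - \<phi> (shiftp (int n) w) \<partial>\<tau>)\<bar> \<le> e"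
    proof (rule abs_int_le[OF P])
      show "integrable \<tau> (\<lambda>w. f (int n) w - \<phi> (shiftp (int n) w))"
        using fi intb[OF sm M] by auto
      fix w
      show "\<bar>f (int n) w - \<phi> (shiftp (int n) w)\<bar> \<le> e"
        unfolding f_def using n(2) by (intro less_imp_le N) (auto simp: shiftp_def bdry_def)
    qed
    then have 2: "\<bar>c (int n) - (\<integral>w. \<phi> w \<partial>\<tau>)\<bar> \<le> e"
      unfolding c_def using fi intb[OF sm M] \<phi>sh[of n] by simp
    have "\<bar>(\<integral>w. f (- int n - 1) w - \<phi> (\<lambda>_. a) \<partial>\<tau>)\<bar> \<le> e"
    proof (rule abs_int_le[OF P])
      show "integrable \<tau> (\<lambda>w. f (- int n - 1) w - \<phi> (\<lambda>_. a))"
        using Bochner_Integration.integrable_diff[OF fi finite_measure.integrable_const[OF prob_space.finite_measure[OF P]]] .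
      fix w
      show "\<bar>f (- int n - 1) w - \<phi> (\<lambda>_. a)\<bar> \<le> e"
        unfolding f_def using n(2) by (intro less_imp_le N) (auto simp: shiftp_def bdry_def)
    qed
    moreover have "(\<integral>w. f (- int n - 1) w - \<phi> (\<lambda>_. a) \<partial>\<tau>) = c (- int n - 1) - \<phi> (\<lambda>_. a)"
      unfolding c_def
      by (subst Bochner_Integration.integral_diff[OF fi finite_measure.integrable_const[OF prob_space.finite_measure[OF P]]])
        (simp add: prob_space.prob_space[OF P])
    ultimately have 3: "\<bar>c (- int n - 1) - \<phi> (\<lambda>_. a)\<bar> \<le> e" by simp
    show ?thesis using 1 2 3 unfolding D_def by linarith
  qed
  have "D = 0"
  proof (rule ccontr)
    assume "D \<noteq> 0"
    then have "\<bar>D\<bar> / 4 > 0" by simp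
    from Dle[OF this] show False using \<open>\<bar>D\<bar> / 4 > 0\<close> by linarith
  qed
  then show "(\<integral>w. phi_gamma \<phi> a w \<partial>\<tau>) = (\<integral>w. \<phi> w \<partial>\<tau>) + - \<phi> (\<lambda>_. a)"
    unfolding D_def by linarith
qed

end
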